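(* Let $X$ be a totally disconnected compact Hausdorff space and let $A$ be a unital $C(X)$-algebra such that every fibre $A_x$, $x\in X$, is properly infinite. Then $A$ is properly infinite.
   Context: A $C(X)$-algebra is a $C^*$-algebra $A$ with a unital $*$-homomorphism from $C(X)$ into the center of the multiplier algebra of $A$; its fibre at $x$ is $A_x=A/C_0(X\setminus\{x\})A$. A unital $C^*$-algebra is properly infinite if there are mutually orthogonal projections $e,f$ with $e\sim1\sim f$ (Murray–von Neumann equivalence). *)

theory Defs
  imports "HOL-Analysis.Analysis"
begin

text \<open>Complex scalar multiplication sc and the involution st are
explicit parameters, since HOL has no complex-vector-space or star-algebra class.\<close>

definition cstar_algebra :: "(complex \<Rightarrow> 'a::{real_normed_algebra_1,banach} \<Rightarrow> 'a) \<Rightarrow> ('a \<Rightarrow> 'a) \<Rightarrow> bool"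
  where "cstar_algebra sc st \<longleftrightarrow>
     (\<forall>r a. sc (complex_of_real r) a = r *\<^sub>R a) \<and>
     (\<forall>c d a. sc c (sc d a) = sc (c * d) a) \<and>
     (\<forall>c a b. sc c (a + b) = sc c a + sc c b) \<and>
     (\<forall>c d a. sc (c + d) a = sc c a + sc d a) \<and>
     (\<forall>c a b. sc c (a * b) = sc c a * b \<and> sc c (a * b) = a * sc c b) \<and>
     (\<forall>c a. norm (sc c a) = cmod c * norm a) \<and>
     (\<forall>a. st (st a) = a) \<and>
     (\<forall>a b. st (a + b) = st a + st b) \<and>
     (\<forall>c a. st (sc c a) = sc (cnj c) (st a)) \<and>
     (\<forall>a b. st (a * b) = st b * st a) \<and>
     (\<forall>a. norm (st a * a) = norm a ^ 2)"

text \<open>A unital C(X)-algebra structure on a unital C*-algebra: a unital *-homomorphism phi from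
C(X) (continuous complex functions on X) into the centre of A (= centre of M(A), A unital).\<close>

definition cx_algebra ::
  "(complex \<Rightarrow> 'a::{real_normed_algebra_1,banach} \<Rightarrow> 'a) \<Rightarrow> ('a \<Rightarrow> 'a) \<Rightarrow> (('x::topological_space \<Rightarrow> complex) \<Rightarrow> 'a) \<Rightarrow> bool"
  where "cx_algebra sc st \<phi> \<longleftrightarrow>
     \<phi> (\<lambda>_. 1) = 1 \<and>
     (\<forall>f g. continuous_on UNIV f \<longrightarrow> continuous_on UNIV g \<longrightarrow>
        \<phi> (\<lambda>t. f t + g t) = \<phi> f + \<phi> g \<and> \<phi> (\<lambda>t. f t * g t) = \<phi> f * \<phi> g) \<and>
     (\<forall>c f. continuous_on UNIV f \<longrightarrow> \<phi> (\<lambda>t. c * f t) = sc c (\<phi> f)) \<and>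
     (\<forall>f. continuous_on UNIV f \<longrightarrow> \<phi> (\<lambda>t. cnj (f t)) = st (\<phi> f)) \<and>
     (\<forall>f a. continuous_on UNIV f \<longrightarrow> \<phi> f * a = a * \<phi> f)"

text \<open>The ideal C_0(X - {x}) A: closed linear span of products phi(g) a with g continuous,
g(x) = 0 (finite sums of such products are already closed under complex scalars).\<close>

definition fibre_ideal :: "(('x::topological_space \<Rightarrow> complex) \<Rightarrow> 'a::{real_normed_algebra_1,banach}) \<Rightarrow> 'x \<Rightarrow> 'a set"
  where "fibre_ideal \<phi> x = closure
     {(\<Sum>i<n. \<phi> (g i) * b i) | (n::nat) (g::nat \<Rightarrow> 'x \<Rightarrow> complex) (b::nat \<Rightarrow> 'a). \<forall>i<n. continuous_on UNIV (g i) \<and> g i x = 0}"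

text \<open>Proper infiniteness of the quotient A/I, written with representatives in A:
a \<equiv> b means a - b \<in> I.\<close>

definition properly_infinite_mod :: "('a::real_normed_algebra_1 \<Rightarrow> 'a) \<Rightarrow> 'a set \<Rightarrow> bool"
  where "properly_infinite_mod st I \<longleftrightarrow>
    (\<exists>e f v w.
       e * e - e \<in> I \<and> st e - e \<in> I \<and> f * f - f \<in> I \<and> st f - f \<in> I \<and>
       e * f \<in> I \<and>
       st v * v - 1 \<in> I \<and> v * st v - e \<in> I \<and>
       st w * w - 1 \<in> I \<and> w * st w - f \<in> I)"

definition properly_infinite :: "('a::real_normed_algebra_1 \<Rightarrow> 'a) \<Rightarrow> 'a \<Rightarrow> bool"
  where "properly_infinite st (u::'a) \<longleftrightarrow>
    (\<exists>e f v w.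
       e * e = e \<and> st e = e \<and> f * f = f \<and> st f = f \<and> e * f = 0 \<and>
       st v * v = 1 \<and> v * st v = e \<and> st w * w = 1 \<and> w * st w = f)"

end

theory Submission
  imports Defs "HOL-Computational_Algebra.Formal_Power_Series"
begin


lemma clopen_nbhd:
  fixes x :: "'x::t2_space"
  assumes cpt: "compact (UNIV::'x set)" and cc: "\<forall>x::'x. connected_component_set UNIV x = {x}"
    and N: "open N" "x \<in> N"
  shows "\<exists>U. open U \<and> closed U \<and> x \<in> U \<and> U \<subseteq> N"
proof -
  have H: "Hausdorff_space (euclidean :: 'x topology)"
    unfolding Hausdorff_space_def by (metis disjnt_def open_openin separation_t2 topspace_euclidean)
  have C: "compact_space (euclidean :: 'x topology)"
    using cpt by (simp add: compact_space_def)
  have q: "quasi_component_of euclidean x = connected_component_of euclidean x"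
    by (rule quasi_eq_connected_component_of) (simp add: H C)
  have "connected_component_of_set euclidean x = {x}"
  proof -
    have "connected_component_of euclidean x y \<longleftrightarrow> y \<in> connected_component_set UNIV x" for y
      unfolding connected_component_of_def connected_component_def by auto
    then show ?thesis using cc by auto
  qed
  with q have qx: "quasi_component_of_set euclidean x = {x}" by simp
  have Cq: "{x} \<in> quasi_components_of euclidean"
    unfolding quasi_components_of_def using qx by (metis UNIV_I image_eqI topspace_euclidean)
  have K: "compactin euclidean (- N)"
    using closed_Int_compact[of "- N" UNIV] cpt N by auto
  have "separated_between euclidean {x} (- N)"
    using separated_between_quasi_component_compact[OF Cq K] N by auto
  then obtain U V where UV: "open U" "open V" "U \<union> V = UNIV" "disjnt U V" "{x} \<subseteq> U" "- N \<subseteq> V"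
    unfolding separated_between_def by auto
  have "U = - V" using UV by (auto simp: disjnt_def)
  then have "closed U" using UV by auto
  then show ?thesis using UV by (auto simp: disjnt_def)
qed


definition cf :: "nat \<Rightarrow> real" where "cf n = (-1)^n * ((-1/2::real) gchoose n)"

lemma cf_Suc: "cf (Suc n) = cf n * ((real n + 1/2) / (real n + 1))"
proof -
  have h: "(real n + 1) * ((-1/2::real) gchoose (Suc n)) = (-1/2 - real n) * ((-1/2) gchoose n)"
    using gbinomial_mult_1[of "-1/2::real" n] by (simp add: algebra_simps)
  have nz: "real n + 1 \<noteq> 0" by linarith
  from h nz have e: "((-1/2::real) gchoose (Suc n)) = (-1/2 - real n) / (real n + 1) * ((-1/2) gchoose n)"
    by (simp add: field_simps)
  show ?thesis unfolding cf_def e using nz by (simp add: field_simps)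
qed

lemma cf_bound: "\<bar>cf n\<bar> \<le> 1"
proof (induction n)
  case 0 then show ?case by (simp add: cf_def)
next
  case (Suc n)
  have "\<bar>(real n + 1/2) / (real n + 1)\<bar> \<le> 1" by (simp add: field_simps)
  then have "\<bar>cf n\<bar> * \<bar>(real n + 1/2) / (real n + 1)\<bar> \<le> 1 * 1"
    using Suc by (intro mult_mono) auto
  then show ?case by (simp add: cf_Suc abs_mult)
qed

lemma cf_conv: "(\<Sum>k\<le>n. cf k * cf (n - k)) = 1"
proof -
  have "(\<Sum>k\<le>n. cf k * cf (n - k)) = (\<Sum>k\<le>n. (-1)^n * (((-1/2::real) gchoose k) * ((-1/2) gchoose (n - k))))"
  proof (rule sum.cong)
    fix k assume "k \<in> {..n}"
    then have "(-1::real)^k * (-1)^(n-k) = (-1)^n" by (simp add: power_add[symmetric])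
    then show "cf k * cf (n - k) = (-1)^n * (((-1/2::real) gchoose k) * ((-1/2) gchoose (n - k)))"
      unfolding cf_def by (metis (no_types, lifting) mult.assoc mult.left_commute)
  qed simp
  also have "\<dots> = (-1)^n * ((-1/2 + -1/2::real) gchoose n)"
  proof -
    have V: "(\<Sum>k\<le>n. ((-1/2::real) gchoose k) * ((-1/2) gchoose (n - k))) = ((-1/2 + -1/2::real) gchoose n)"
      using gbinomial_Vandermonde[of "-1/2::real" "-1/2" n] by (simp add: atLeast0AtMost)
    show ?thesis by (simp only: V sum_distrib_left[symmetric])
  qed
  also have "((-1/2 + -1/2::real) gchoose n) = (-1)^n"
  proof -
    have "((-1::real) gchoose n) = (-1)^n * ((1 + of_nat n - 1) gchoose n)"
      using gbinomial_minus[of "1::real" n] by simp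
    also have "\<dots> = (-1)^n" using binomial_gbinomial[of n n, where 'a=real] by simp
    finally show ?thesis by simp
  qed
  finally show ?thesis by (simp add: power_mult_distrib[symmetric])
qed

lemma power_comm_gen: "p * y = y * p \<Longrightarrow> p * y ^ n = y ^ n * (p::'a::monoid_mult)"
  by (induction n) (simp_all add: mult.assoc[symmetric], metis mult.assoc)

lemma invsqrt_series:
  fixes y :: "'a::{real_normed_algebra_1,banach}"
  assumes ny: "norm y \<le> 1/2"
  defines "r \<equiv> (\<Sum>n. cf n *\<^sub>R y ^ n)"
  shows "r * r * (1 - y) = 1" "norm r \<le> 2" "\<And>p. p * y = y * p \<Longrightarrow> p * r = r * p"
    "summable (\<lambda>n. cf n *\<^sub>R y ^ n)"
proof -
  have ny1: "norm y < 1" using ny by simp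
  have bnd: "norm (cf n *\<^sub>R y ^ n) \<le> norm y ^ n" for n
  proof -
    have "norm (cf n *\<^sub>R y ^ n) = \<bar>cf n\<bar> * norm (y ^ n)" by simp
    also have "\<dots> \<le> 1 * norm y ^ n"
      using cf_bound[of n] norm_power_ineq[of y n] by (intro mult_mono) auto
    finally show ?thesis by simp
  qed
  have sg: "summable (\<lambda>n. norm y ^ n)" using ny1 by (intro summable_geometric) simp
  have sn: "summable (\<lambda>n. norm (cf n *\<^sub>R y ^ n))"
    by (rule summable_comparison_test[OF _ sg]) (use bnd in auto)
  then show sm: "summable (\<lambda>n. cf n *\<^sub>R y ^ n)" by (rule summable_norm_cancel)
  have "norm r \<le> (\<Sum>n. norm (cf n *\<^sub>R y ^ n))" unfolding r_def by (rule summable_norm[OF sn])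
  also have "\<dots> \<le> (\<Sum>n. norm y ^ n)" by (rule suminf_le[OF bnd sn sg])
  also have "\<dots> = 1 / (1 - norm y)" using ny1 by (intro suminf_geometric) simp
  also have "\<dots> \<le> 2" using ny by (simp add: field_simps)
  finally show "norm r \<le> 2" .
  have cp: "(\<lambda>k. \<Sum>i\<le>k. (cf i *\<^sub>R y ^ i) * (cf (k - i) *\<^sub>R y ^ (k - i))) sums (r * r)"
    unfolding r_def by (rule Cauchy_product_sums[OF sn sn])
  have "(\<Sum>i\<le>k. (cf i *\<^sub>R y ^ i) * (cf (k - i) *\<^sub>R y ^ (k - i))) = y ^ k" for k
  proof -
    have "(\<Sum>i\<le>k. (cf i *\<^sub>R y ^ i) * (cf (k - i) *\<^sub>R y ^ (k - i))) = (\<Sum>i\<le>k. (cf i * cf (k - i)) *\<^sub>R y ^ k)"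
      by (rule sum.cong) (auto simp: power_add[symmetric])
    also have "\<dots> = (\<Sum>i\<le>k. cf i * cf (k - i)) *\<^sub>R y ^ k" by (simp add: scaleR_sum_left)
    finally show ?thesis by (simp add: cf_conv)
  qed
  with cp have geo: "(\<lambda>k. y ^ k) sums (r * r)" by simp
  then have s1: "(\<lambda>k. y ^ k * (1 - y)) sums (r * r * (1 - y))" by (rule sums_mult2)
  have lim0: "(\<lambda>n. y ^ n) \<longlonglongrightarrow> 0"
    using ny1 by (intro LIMSEQ_power_zero) simp
  have "(\<lambda>n. (- (y ^ Suc n)) - (- (y ^ n))) sums (0 - (- (y ^ 0)))"
    by (rule telescope_sums[of "\<lambda>n. - (y ^ n)" 0]) (use tendsto_minus[OF lim0] in simp)
  moreover have "(\<lambda>n. (- (y ^ Suc n)) - (- (y ^ n))) = (\<lambda>k. y ^ k * (1 - y))"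
    by (auto simp: algebra_simps power_commutes)
  ultimately have "(\<lambda>k. y ^ k * (1 - y)) sums 1" by simp
  with s1 show "r * r * (1 - y) = 1" using sums_unique2 by blast
  fix p assume py: "p * y = y * p"
  have "p * r = (\<Sum>n. p * (cf n *\<^sub>R y ^ n))" unfolding r_def by (rule suminf_mult[OF sm, symmetric])
  also have "\<dots> = (\<Sum>n. (cf n *\<^sub>R y ^ n) * p)" using power_comm_gen[OF py] by simp
  also have "\<dots> = r * p" unfolding r_def by (rule suminf_mult2[OF sm, symmetric])
  finally show "p * r = r * p" .
qed


locale cstar =
  fixes sc :: "complex \<Rightarrow> 'a::{real_normed_algebra_1,banach} \<Rightarrow> 'a" and st :: "'a \<Rightarrow> 'a"
  assumes cs: "cstar_algebra sc st"
begin

lemmas C = cs[unfolded cstar_algebra_def]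

lemma sc_real: "sc (complex_of_real r) a = r *\<^sub>R a" using C by simp
lemma sc_sc: "sc c (sc d a) = sc (c * d) a" using C by simp
lemma sc_add: "sc c (a + b) = sc c a + sc c b" using C by simp
lemma sc_norm: "norm (sc c a) = cmod c * norm a" using C by simp
lemma st_st[simp]: "st (st a) = a" using C by simp
lemma st_add: "st (a + b) = st a + st b" using C by simp
lemma st_sc: "st (sc c a) = sc (cnj c) (st a)" using C by simp
lemma st_mult: "st (a * b) = st b * st a" using C by simp
lemma cstar_id: "norm (st a * a) = norm a ^ 2" using C by simp

lemma st_zero[simp]: "st 0 = 0"
  using st_add[of 0 0] by simp
lemma st_minus: "st (- a) = - st a"
proof -
  have "st a + st (-a) = 0" using st_add[of a "-a"] by simp
  then show ?thesis by (metis minus_unique)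
qed
lemma st_diff: "st (a - b) = st a - st b"
  using st_add[of a "-b"] st_minus[of b] by simp
lemma st_one[simp]: "st 1 = 1"
proof -
  have "st (st 1 * 1) = st 1 * st (st 1)" by (rule st_mult)
  then show ?thesis by simp
qed
lemma st_scaleR: "st (r *\<^sub>R a) = r *\<^sub>R st a"
  using st_sc[of "complex_of_real r" a] by (simp add: sc_real)

lemma norm_st[simp]: "norm (st a) = norm a"
proof -
  have le: "norm b \<le> norm (st b)" for b
  proof (cases "b = 0")
    case False
    have "norm b ^ 2 \<le> norm (st b) * norm b"
      using cstar_id[of b] norm_mult_ineq[of "st b" b] by simp
    then show ?thesis using False by (simp add: power2_eq_square)
  qed simp
  show ?thesis using le[of a] le[of "st a"] by simp
qed

lemma st_power: "st (y ^ n) = st y ^ n"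
proof (induction n)
  case (Suc n)
  have "st (y ^ Suc n) = st (y ^ n) * st y" by (simp only: power_Suc st_mult)
  then show ?case by (simp only: Suc power_Suc2)
qed simp

lemma bl_st: "bounded_linear st"
  by (rule bounded_linear_intro[where K=1]) (simp_all add: st_add st_scaleR)

lemma norm_proj: assumes "st p = p" "p * p = p" shows "norm p \<le> 1"
proof -
  have "norm p ^ 2 = norm p" using cstar_id[of p] assms by simp
  then have "norm p * (norm p - 1) = 0" by (simp add: power2_eq_square algebra_simps)
  then show ?thesis by auto
qed

lemma norm_iso: assumes "st u * u = 1" shows "norm u = 1"
proof -
  have "norm u ^ 2 = 1" using cstar_id[of u] assms by simp
  then show ?thesis using norm_ge_zero[of u] by (auto simp add: power2_eq_1_iff)
qed

lemma invsqrt: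
  assumes "st y = y" "norm y \<le> 1/2"
  shows "\<exists>r. st r = r \<and> r * (1 - y) * r = 1 \<and> norm r \<le> 2 \<and> (\<forall>p. p * y = y * p \<longrightarrow> p * r = r * p)"
proof -
  define r where "r = (\<Sum>n. cf n *\<^sub>R y ^ n)"
  note R = invsqrt_series[OF assms(2), folded r_def]
  have "st r = (\<Sum>n. st (cf n *\<^sub>R y ^ n))" unfolding r_def
    by (rule bounded_linear.suminf[OF bl_st R(4)])
  also have "\<dots> = r" unfolding r_def by (simp only: st_scaleR st_power assms(1))
  finally have sr: "st r = r" .
  have yr: "y * r = r * y" using R(3)[of y] by simp
  have "r * (1 - y) * r = r * r * (1 - y)"
    by (simp add: algebra_simps yr)
  then have "r * (1 - y) * r = 1" using R(1) by simp
  then show ?thesis using sr R(2) R(3) by blast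
qed

end


context cstar begin

lemma normalize:
  assumes sp: "st p = p" and pp: "p * p = p" and cen: "\<And>a. p * a = a * p"
    and nv: "norm (p * (st v * v - 1)) \<le> 1/2"
  shows "\<exists>r. st (p * v * r) * (p * v * r) = p \<and> p * (p * v * r) = p * v * r \<and> norm r \<le> 2
     \<and> st r = r \<and> r * p = p * r"
proof -
  have cenR: "a * (p * z) = p * (a * z)" for a z
    by (metis cen mult.assoc)
  define y where "y = p * (1 - st v * v)"
  have sy: "st y = y" unfolding y_def
    by (simp add: st_mult st_diff sp cen[of "1 - st v * v"])
  have "y = - (p * (st v * v - 1))" unfolding y_def by (simp add: algebra_simps)
  then have ny: "norm y \<le> 1/2" using nv by simp
  obtain r where r: "st r = r" "r * (1 - y) * r = 1" "norm r \<le> 2" "\<And>q. q * y = y * q \<Longrightarrow> q * r = r * q"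
    using invsqrt[OF sy ny] by blast
  have pr: "p * r = r * p" using r(4)[of p] cen[of y] by simp
  have pp2: "p * (p * z) = p * z" for z using pp by (simp add: mult.assoc[symmetric])
  have e1: "p * (1 - y) = p * (st v * v)" unfolding y_def by (simp add: algebra_simps pp pp2)
  have "st (p * v * r) * (p * v * r) = r * (st v * (p * p) * v) * r"
    by (simp add: st_mult sp r(1) mult.assoc)
  also have "\<dots> = r * (p * (st v * v)) * r"
    using cenR[of "st v" "v * r"] pp by (simp add: mult.assoc)
  also have "\<dots> = r * (p * (1 - y)) * r" by (simp add: e1)
  also have "\<dots> = p * (r * (1 - y) * r)"
    using pr by (simp add: mult.assoc[symmetric])
  also have "\<dots> = p" using r(2) by simp
  finally have A: "st (p * v * r) * (p * v * r) = p" .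
  have B: "p * (p * v * r) = p * v * r" using pp by (simp add: mult.assoc[symmetric])
  show ?thesis using A B r(1) r(3) pr by auto
qed

lemma orth:
  assumes sp: "st p = p" and pp: "p * p = p" and cen: "\<And>a. p * a = a * p"
    and b1: "p * b1 = b1" "st b1 * b1 = p" and b2: "p * b2 = b2" "st b2 * b2 = p"
    and nq: "norm (st b1 * b2) \<le> 1/2"
  shows "\<exists>b3. p * b3 = b3 \<and> st b3 * b3 = p \<and> st b1 * b3 = 0"
proof -
  have cenR: "a * (p * z) = p * (a * z)" for a z
    by (metis cen mult.assoc)
  have b1p: "b1 * p = b1" using cen b1 by metis
  have sb1p: "st b1 * p = st b1" using st_mult[of p b1] b1 sp by simp
  have psb1: "p * st b1 = st b1" using cen sb1p by metis
  define B where "B = b1 * st b1"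
  define E where "E = p - B"
  have sE: "st E = E" unfolding E_def B_def by (simp add: st_diff st_mult sp)
  have pB: "p * B = B" unfolding B_def using b1 by (simp add: mult.assoc[symmetric])
  have Bp: "B * p = B" unfolding B_def using sb1p by (simp add: mult.assoc)
  have BB: "B * B = B" unfolding B_def
  proof -
    have "b1 * st b1 * (b1 * st b1) = b1 * (st b1 * b1) * st b1" by (simp add: mult.assoc)
    also have "\<dots> = b1 * st b1" using b1(2) b1p by simp
    finally show "b1 * st b1 * (b1 * st b1) = b1 * st b1" .
  qed
  have EE: "E * E = E" unfolding E_def using pp pB Bp BB by (simp add: algebra_simps)
  have pE: "p * E = E" unfolding E_def using pp pB by (simp add: algebra_simps)
  have sb1E: "st b1 * E = 0" unfolding E_def B_def
    using sb1p b1(2) psb1 by (simp add: algebra_simps mult.assoc[symmetric])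
  define q where "q = st b1 * b2"
  define y where "y = st q * q"
  define t where "t = E * b2"
  have sy: "st y = y" unfolding y_def by (simp add: st_mult)
  have ny: "norm y \<le> 1/2"
  proof -
    have "norm y \<le> norm (st q) * norm q" unfolding y_def by (rule norm_mult_ineq)
    also have "\<dots> = norm q * norm q" by simp
    also have "\<dots> \<le> (1/2) * (1/2)" using nq unfolding q_def by (intro mult_mono) auto
    finally show ?thesis by simp
  qed
  have sq: "st q = st b2 * b1" unfolding q_def by (simp add: st_mult)
  have pq: "p * q = q" unfolding q_def using psb1 by (simp add: mult.assoc[symmetric])
  have py: "p * y = y" unfolding y_def by (metis cenR pq)
  have tt: "st t * t = p - y"
  proof -
    have "st t * t = st b2 * (E * E) * b2" unfolding t_def by (simp add: st_mult sE mult.assoc)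
    also have "\<dots> = st b2 * E * b2" using EE by simp
    also have "\<dots> = st b2 * (p * b2) - (st b2 * b1) * (st b1 * b2)"
      unfolding E_def B_def by (simp add: algebra_simps)
    also have "\<dots> = p - y" unfolding y_def sq[symmetric] q_def[symmetric] using b2 by simp
    finally show ?thesis .
  qed
  have py2: "p - y = p * (1 - y)" using py by (simp add: algebra_simps)
  obtain r where r: "st r = r" "r * (1 - y) * r = 1" "\<And>z. z * y = y * z \<Longrightarrow> z * r = r * z"
    using invsqrt[OF sy ny] by blast
  have pr: "p * r = r * p" using r(3)[of p] cen[of y] by simp
  define b3 where "b3 = t * r"
  have "st b3 * b3 = r * (st t * t) * r" unfolding b3_def by (simp add: st_mult r(1) mult.assoc)
  also have "\<dots> = r * (p * (1 - y)) * r" by (simp add: tt py2)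
  also have "\<dots> = p * (r * (1 - y) * r)" using pr by (simp add: mult.assoc[symmetric])
  also have "\<dots> = p" using r(2) by simp
  finally have A: "st b3 * b3 = p" .
  have B3: "p * b3 = b3" unfolding b3_def t_def using pE by (simp add: mult.assoc[symmetric])
  have C3: "st b1 * b3 = 0" unfolding b3_def t_def using sb1E by (simp add: mult.assoc[symmetric])
  show ?thesis using A B3 C3 by blast
qed

end


locale cxa = cstar sc st
  for sc :: "complex \<Rightarrow> 'a::{real_normed_algebra_1,banach} \<Rightarrow> 'a" and st :: "'a \<Rightarrow> 'a" +
  fixes \<phi> :: "('x::topological_space \<Rightarrow> complex) \<Rightarrow> 'a"
  assumes cx: "cx_algebra sc st \<phi>"
begin

lemmas CX = cx[unfolded cx_algebra_def]

lemma phi_one: "\<phi> (\<lambda>_. 1) = 1" using CX by blast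
lemma phi_add: "continuous_on UNIV f \<Longrightarrow> continuous_on UNIV g \<Longrightarrow> \<phi> (\<lambda>t. f t + g t) = \<phi> f + \<phi> g"
  using CX by blast
lemma phi_mult: "continuous_on UNIV f \<Longrightarrow> continuous_on UNIV g \<Longrightarrow> \<phi> (\<lambda>t. f t * g t) = \<phi> f * \<phi> g"
  using CX by blast
lemma phi_sc: "continuous_on UNIV f \<Longrightarrow> \<phi> (\<lambda>t. c * f t) = sc c (\<phi> f)"
  using CX by blast
lemma phi_cnj: "continuous_on UNIV f \<Longrightarrow> \<phi> (\<lambda>t. cnj (f t)) = st (\<phi> f)"
  using CX by blast
lemma phi_cen: "continuous_on UNIV f \<Longrightarrow> \<phi> f * a = a * \<phi> f"
  using CX by blast

lemma phi_zero: "\<phi> (\<lambda>_. 0) = 0"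
  using phi_add[of "\<lambda>_. 0" "\<lambda>_. 0"] by simp

lemma phi_real_bound:
  fixes u :: "'x \<Rightarrow> real"
  assumes cu: "continuous_on UNIV u" and bu: "\<And>t. \<bar>u t\<bar> \<le> 1"
  shows "norm (\<phi> (\<lambda>t. complex_of_real (u t))) \<le> 1"
proof -
  define s where "s t = sqrt (1 - (u t)^2)" for t
  have ss: "s t * s t = 1 - (u t)^2" for t
  proof -
    have "(u t)^2 \<le> 1" using abs_le_square_iff[of "u t" 1] bu[of t] by simp
    then show ?thesis unfolding s_def by (simp add: real_sqrt_mult[symmetric])
  qed
  define w where "w t = complex_of_real (u t) + \<i> * complex_of_real (s t)" for t
  have cs: "continuous_on UNIV s" unfolding s_def by (intro continuous_intros cu)
  have cw: "continuous_on UNIV w" unfolding w_def by (intro continuous_intros cu cs)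
  have cw': "continuous_on UNIV (\<lambda>t. cnj (w t))" by (intro continuous_intros cw)
  have ww: "cnj (w t) * w t = 1" for t
    using ss[of t] unfolding w_def by (simp add: complex_eq_iff power2_eq_square)
  have "st (\<phi> w) * \<phi> w = \<phi> (\<lambda>t. cnj (w t) * w t)"
    using phi_cnj[OF cw] phi_mult[OF cw' cw] by simp
  also have "\<dots> = 1" using ww phi_one by simp
  finally have "norm (\<phi> w) = 1" by (rule norm_iso)
  have uw: "(\<lambda>t. complex_of_real (u t)) = (\<lambda>t. (1/2) * (w t + cnj (w t)))"
    by (rule ext) (simp add: w_def complex_eq_iff)
  have "\<phi> (\<lambda>t. complex_of_real (u t)) = sc (1/2) (\<phi> w + st (\<phi> w))"
    unfolding uw
    by (subst phi_sc) (auto intro!: continuous_intros cw simp: phi_add[OF cw cw'] phi_cnj[OF cw])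
  then have "norm (\<phi> (\<lambda>t. complex_of_real (u t))) = 1/2 * norm (\<phi> w + st (\<phi> w))"
    by (simp add: sc_norm)
  also have "\<dots> \<le> 1/2 * (norm (\<phi> w) + norm (st (\<phi> w)))"
    by (intro mult_left_mono norm_triangle_ineq) auto
  also have "\<dots> = 1" using \<open>norm (\<phi> w) = 1\<close> by simp
  finally show ?thesis .
qed

lemma phi_bound:
  assumes ch: "continuous_on UNIV h" and bh: "\<And>t. norm (h t) \<le> M" and M: "M > 0"
  shows "norm (\<phi> h) \<le> 2 * M"
proof -
  define u1 where "u1 t = Re (h t) / M" for t
  define u2 where "u2 t = Im (h t) / M" for t
  have c1: "continuous_on UNIV u1" unfolding u1_def by (intro continuous_intros ch) (use M in auto)
  have c2: "continuous_on UNIV u2" unfolding u2_def by (intro continuous_intros ch) (use M in auto)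
  have b1: "\<bar>u1 t\<bar> \<le> 1" for t
    using abs_Re_le_cmod[of "h t"] bh[of t] M unfolding u1_def by (simp add: divide_le_eq_1)
  have b2: "\<bar>u2 t\<bar> \<le> 1" for t
    using abs_Im_le_cmod[of "h t"] bh[of t] M unfolding u2_def by (simp add: divide_le_eq_1)
  have cc1: "continuous_on UNIV (\<lambda>t. complex_of_real (u1 t))" by (intro continuous_intros c1)
  have cc2: "continuous_on UNIV (\<lambda>t. complex_of_real (u2 t))" by (intro continuous_intros c2)
  have cc2': "continuous_on UNIV (\<lambda>t. \<i> * complex_of_real (u2 t))" by (intro continuous_intros c2)
  have hh: "h = (\<lambda>t. complex_of_real M * (complex_of_real (u1 t) + \<i> * complex_of_real (u2 t)))"
    by (rule ext) (use M in \<open>simp add: u1_def u2_def complex_eq_iff\<close>)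
  have "\<phi> h = sc (complex_of_real M) (\<phi> (\<lambda>t. complex_of_real (u1 t)) + sc \<i> (\<phi> (\<lambda>t. complex_of_real (u2 t))))"
    unfolding hh
    by (subst phi_sc) (auto intro!: continuous_intros c1 c2 simp: phi_add[OF cc1 cc2'] phi_sc[OF cc2])
  then have "norm (\<phi> h) = M * norm (\<phi> (\<lambda>t. complex_of_real (u1 t)) + sc \<i> (\<phi> (\<lambda>t. complex_of_real (u2 t))))"
    using M by (simp add: sc_norm)
  also have "\<dots> \<le> M * (norm (\<phi> (\<lambda>t. complex_of_real (u1 t))) + norm (sc \<i> (\<phi> (\<lambda>t. complex_of_real (u2 t)))))"
    using M by (intro mult_left_mono norm_triangle_ineq) auto
  also have "\<dots> \<le> M * (1 + 1)"
    using phi_real_bound[OF c1 b1] phi_real_bound[OF c2 b2] M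
    by (intro mult_left_mono add_mono) (auto simp: sc_norm)
  finally show ?thesis by simp
qed

end


definition ind :: "'x set \<Rightarrow> 'x \<Rightarrow> complex" where "ind U t = (if t \<in> U then 1 else 0)"

lemma cont_ind: "open U \<Longrightarrow> closed U \<Longrightarrow> continuous_on UNIV (ind U)"
proof -
  assume "open U" "closed U"
  then have "continuous_on (U \<union> -U) (\<lambda>t. if t \<in> U then (1::complex) else 0)"
    by (intro continuous_on_cases) (auto intro: continuous_on_const)
  moreover have "U \<union> -U = UNIV" by blast
  ultimately show ?thesis unfolding ind_def by simp
qed

lemma sum_split_nat: "(\<Sum>i<(n1::nat) + (n2::nat). (h i :: 'b::comm_monoid_add)) = (\<Sum>i<n1. h i) + (\<Sum>i<n2. h (n1 + i))"
  by (induction n2) (simp_all add: add.assoc)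

context cxa begin

definition good :: "'x set \<Rightarrow> bool" where
  "good U \<longleftrightarrow> (\<exists>b1 b2. \<phi> (ind U) * b1 = b1 \<and> \<phi> (ind U) * b2 = b2 \<and>
      st b1 * b1 = \<phi> (ind U) \<and> st b2 * b2 = \<phi> (ind U) \<and> st b1 * b2 = 0)"

lemma P_sa: "open U \<Longrightarrow> closed U \<Longrightarrow> st (\<phi> (ind U)) = \<phi> (ind U)"
proof -
  assume "open U" "closed U"
  note c = cont_ind[OF this]
  have "(\<lambda>t. cnj (ind U t)) = ind U" by (rule ext) (simp add: ind_def)
  then show ?thesis using phi_cnj[OF c] by simp
qed

lemma P_int: "open U \<Longrightarrow> closed U \<Longrightarrow> open V \<Longrightarrow> closed V \<Longrightarrow>
    \<phi> (ind (U \<inter> V)) = \<phi> (ind U) * \<phi> (ind V)"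
proof -
  assume a: "open U" "closed U" "open V" "closed V"
  have "ind (U \<inter> V) = (\<lambda>t. ind U t * ind V t)" by (rule ext) (simp add: ind_def)
  then show ?thesis using phi_mult[OF cont_ind[OF a(1,2)] cont_ind[OF a(3,4)]] by simp
qed

lemma P_idem: "open U \<Longrightarrow> closed U \<Longrightarrow> \<phi> (ind U) * \<phi> (ind U) = \<phi> (ind U)"
  using P_int[of U U] by simp

lemma P_cen: "open U \<Longrightarrow> closed U \<Longrightarrow> \<phi> (ind U) * a = a * \<phi> (ind U)"
  using phi_cen[OF cont_ind] by blast

lemma P_un: "open U \<Longrightarrow> closed U \<Longrightarrow> open V \<Longrightarrow> closed V \<Longrightarrow> U \<inter> V = {} \<Longrightarrow>
    \<phi> (ind (U \<union> V)) = \<phi> (ind U) + \<phi> (ind V)"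
proof -
  assume a: "open U" "closed U" "open V" "closed V" "U \<inter> V = {}"
  have "ind (U \<union> V) = (\<lambda>t. ind U t + ind V t)" by (rule ext) (use a(5) in \<open>auto simp add: ind_def\<close>)
  then show ?thesis using phi_add[OF cont_ind[OF a(1,2)] cont_ind[OF a(3,4)]] by simp
qed

lemma P_empty: "\<phi> (ind {}) = 0"
proof -
  have e: "ind {} = (\<lambda>_. 0)" by (rule ext) (simp add: ind_def)
  show ?thesis unfolding e by (rule phi_zero)
qed

lemma P_univ: "\<phi> (ind UNIV) = 1"
proof -
  have e: "ind UNIV = (\<lambda>_. 1)" by (rule ext) (simp add: ind_def)
  show ?thesis unfolding e by (rule phi_one)
qed

lemma P_norm: "open U \<Longrightarrow> closed U \<Longrightarrow> norm (\<phi> (ind U)) \<le> 1"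
  by (rule norm_proj) (simp_all add: P_sa P_idem)

lemma good_empty: "good {}"
  unfolding good_def by (rule exI[of _ 0], rule exI[of _ 0]) (simp add: P_empty)

lemma disj_orth:
  assumes a: "open U" "closed U" "open V" "closed V" "U \<inter> V = {}"
    and x: "\<phi> (ind U) * x = x" and y: "\<phi> (ind V) * y = y"
  shows "st x * y = 0" "\<phi> (ind U) * y = 0"
proof -
  have "\<phi> (ind U) * y = \<phi> (ind U) * \<phi> (ind V) * y" using y by (simp add: mult.assoc)
  also have "\<dots> = 0" using P_int[OF a(1-4)] a(5) P_empty by simp
  finally show py: "\<phi> (ind U) * y = 0" .
  have "st x = st x * \<phi> (ind U)" using st_mult[of "\<phi> (ind U)" x] x P_sa[OF a(1,2)] by simp
  then have "st x * y = st x * (\<phi> (ind U) * y)" by (metis mult.assoc)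
  then show "st x * y = 0" using py by simp
qed

lemma good_disj_union:
  assumes a: "open U" "closed U" "open V" "closed V" "U \<inter> V = {}" and gU: "good U" and gV: "good V"
  shows "good (U \<union> V)"
proof -
  obtain x1 x2 where X: "\<phi> (ind U) * x1 = x1" "\<phi> (ind U) * x2 = x2"
      "st x1 * x1 = \<phi> (ind U)" "st x2 * x2 = \<phi> (ind U)" "st x1 * x2 = 0"
    using gU unfolding good_def by blast
  obtain y1 y2 where Y: "\<phi> (ind V) * y1 = y1" "\<phi> (ind V) * y2 = y2"
      "st y1 * y1 = \<phi> (ind V)" "st y2 * y2 = \<phi> (ind V)" "st y1 * y2 = 0"
    using gV unfolding good_def by blast
  have a': "V \<inter> U = {}" using a(5) by blast
  note o1 = disj_orth[OF a]
  note o2 = disj_orth[OF a(3,4,1,2) a']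
  have PUV: "\<phi> (ind (U \<union> V)) = \<phi> (ind U) + \<phi> (ind V)" by (rule P_un[OF a])
  have "\<phi> (ind (U \<union> V)) * (x1 + y1) = x1 + y1"
    unfolding PUV using X(1) Y(1) o1(2)[OF X(1) Y(1)] o2(2)[OF Y(1) X(1)] by (simp add: algebra_simps)
  moreover have "\<phi> (ind (U \<union> V)) * (x2 + y2) = x2 + y2"
    unfolding PUV using X(2) Y(2) o1(2)[OF X(2) Y(2)] o2(2)[OF Y(2) X(2)] by (simp add: algebra_simps)
  moreover have "st (x1 + y1) * (x1 + y1) = \<phi> (ind (U \<union> V))"
    unfolding PUV using X(3) Y(3) o1(1)[OF X(1) Y(1)] o2(1)[OF Y(1) X(1)] by (simp add: algebra_simps st_add)
  moreover have "st (x2 + y2) * (x2 + y2) = \<phi> (ind (U \<union> V))"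
    unfolding PUV using X(4) Y(4) o1(1)[OF X(2) Y(2)] o2(1)[OF Y(2) X(2)] by (simp add: algebra_simps st_add)
  moreover have "st (x1 + y1) * (x2 + y2) = 0"
    using X(5) Y(5) o1(1)[OF X(1) Y(2)] o2(1)[OF Y(1) X(2)] by (simp add: algebra_simps st_add)
  ultimately show ?thesis unfolding good_def by blast
qed

lemma good_sub:
  assumes a: "open U" "closed U" "open W" "closed W" "W \<subseteq> U" and gU: "good U"
  shows "good W"
proof -
  obtain x1 x2 where X: "\<phi> (ind U) * x1 = x1" "\<phi> (ind U) * x2 = x2"
      "st x1 * x1 = \<phi> (ind U)" "st x2 * x2 = \<phi> (ind U)" "st x1 * x2 = 0"
    using gU unfolding good_def by blast
  define p where "p = \<phi> (ind W)"
  have sp: "st p = p" unfolding p_def by (rule P_sa[OF a(3,4)])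
  have pp: "p * p = p" unfolding p_def by (rule P_idem[OF a(3,4)])
  have cen: "p * z = z * p" for z unfolding p_def by (rule P_cen[OF a(3,4)])
  have pU: "p * \<phi> (ind U) = p" unfolding p_def using P_int[OF a(3,4,1,2)] a(5)
    by (simp add: Int_absorb2)
  have key: "st (p * x) * (p * y) = p * (st x * y)" for x y
  proof -
    have "st (p * x) * (p * y) = st x * (p * p) * y" by (simp add: st_mult sp mult.assoc)
    also have "\<dots> = st x * p * y" using pp by simp
    also have "\<dots> = p * (st x * y)" by (metis cen mult.assoc)
    finally show ?thesis .
  qed
  have "p * (p * x1) = p * x1" "p * (p * x2) = p * x2" using pp by (simp_all add: mult.assoc[symmetric])
  moreover have "st (p * x1) * (p * x1) = p" "st (p * x2) * (p * x2) = p" "st (p * x1) * (p * x2) = 0"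
    using key X pU by simp_all
  ultimately show ?thesis unfolding good_def p_def[symmetric] by blast
qed

lemma good_union:
  assumes a: "open U" "closed U" "open V" "closed V" and gU: "good U" and gV: "good V"
  shows "good (U \<union> V)"
proof -
  have o: "open (V - U)" "closed (V - U)" using a by (auto intro: open_Diff closed_Diff)
  have "good (V - U)" by (rule good_sub[OF a(3,4) o]) (use gV in auto)
  then have "good (U \<union> (V - U))" by (intro good_disj_union a o gU) auto
  moreover have "U \<union> (V - U) = U \<union> V" by auto
  ultimately show ?thesis by simp
qed

lemma good_Union:
  assumes "finite F" "\<forall>U\<in>F. open U \<and> closed U \<and> good U"
  shows "good (\<Union>F)"
  using assms
proof (induction F rule: finite_induct)
  case empty then show ?case by (simp add: good_empty)
next
  case (insert U F)
  have "open (\<Union>F)" "closed (\<Union>F)" using insert by auto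
  then show ?case using insert by (simp add: good_union)
qed

end


context cxa begin

definition Sset :: "'x \<Rightarrow> 'a set" where "Sset x =
     {(\<Sum>i<n. \<phi> (g i) * b i) | (n::nat) (g::nat \<Rightarrow> 'x \<Rightarrow> complex) (b::nat \<Rightarrow> 'a). \<forall>i<n. continuous_on UNIV (g i) \<and> g i x = 0}"

lemma FI: "fibre_ideal \<phi> x = closure (Sset x)"
  unfolding fibre_ideal_def Sset_def by simp

lemma S_add: assumes "s \<in> Sset x" "s' \<in> Sset x" shows "s + s' \<in> Sset x"
proof -
  obtain n g b where s: "s = (\<Sum>i<(n::nat). \<phi> (g i) * b i)" "\<forall>i<n. continuous_on UNIV (g i) \<and> g i x = 0"
    using assms(1) unfolding Sset_def mem_Collect_eq by (elim exE conjE) blast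
  obtain n' g' b' where s': "s' = (\<Sum>i<(n'::nat). \<phi> (g' i) * b' i)" "\<forall>i<n'. continuous_on UNIV (g' i) \<and> g' i x = 0"
    using assms(2) unfolding Sset_def mem_Collect_eq by (elim exE conjE) blast
  define G where "G i = (if i < n then g i else g' (i - n))" for i
  define B where "B i = (if i < n then b i else b' (i - n))" for i
  have "(\<Sum>i<n + n'. \<phi> (G i) * B i) = (\<Sum>i<n. \<phi> (G i) * B i) + (\<Sum>i<n'. \<phi> (G (n + i)) * B (n + i))"
    by (rule sum_split_nat)
  also have "(\<Sum>i<n. \<phi> (G i) * B i) = s" unfolding s(1) by (rule sum.cong) (auto simp: G_def B_def)
  also have "(\<Sum>i<n'. \<phi> (G (n + i)) * B (n + i)) = s'" unfolding s'(1) by (rule sum.cong) (auto simp: G_def B_def)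
  finally have e: "s + s' = (\<Sum>i<n + n'. \<phi> (G i) * B i)" by simp
  have "\<forall>i<n + n'. continuous_on UNIV (G i) \<and> G i x = 0"
    using s(2) s'(2) by (auto simp: G_def)
  then show ?thesis unfolding Sset_def e by blast
qed

lemma S_lmult: assumes "s \<in> Sset x" shows "a * s \<in> Sset x"
proof -
  obtain n g b where s: "s = (\<Sum>i<(n::nat). \<phi> (g i) * b i)" "\<forall>i<n. continuous_on UNIV (g i) \<and> g i x = 0"
    using assms(1) unfolding Sset_def mem_Collect_eq by (elim exE conjE) blast
  have eq: "a * s = (\<Sum>i<n. \<phi> (g i) * (a * b i))"
    unfolding s(1) sum_distrib_left
  proof (rule sum.cong)
    fix i assume "i \<in> {..<n}"
    then have "\<phi> (g i) * a = a * \<phi> (g i)" using s(2) phi_cen by blast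
    then show "a * (\<phi> (g i) * b i) = \<phi> (g i) * (a * b i)" by (metis mult.assoc)
  qed simp
  show ?thesis unfolding Sset_def mem_Collect_eq
    by (rule exI[where x=n], rule exI[where x=g], rule exI[where x="\<lambda>i. a * b i"]) (simp add: eq s(2))
qed

lemma S_rmult: assumes "s \<in> Sset x" shows "s * a \<in> Sset x"
proof -
  obtain n g b where s: "s = (\<Sum>i<(n::nat). \<phi> (g i) * b i)" "\<forall>i<n. continuous_on UNIV (g i) \<and> g i x = 0"
    using assms(1) unfolding Sset_def mem_Collect_eq by (elim exE conjE) blast
  have eq: "s * a = (\<Sum>i<n. \<phi> (g i) * (b i * a))"
    unfolding s(1) sum_distrib_right by (simp add: mult.assoc)
  show ?thesis unfolding Sset_def mem_Collect_eq
    by (rule exI[where x=n], rule exI[where x=g], rule exI[where x="\<lambda>i. b i * a"]) (simp add: eq s(2))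
qed

lemma I_lmult: assumes "z \<in> fibre_ideal \<phi> x" shows "a * z \<in> fibre_ideal \<phi> x"
proof -
  have "(\<lambda>z. a * z) ` closure (Sset x) \<subseteq> closure (Sset x)"
    by (rule image_closure_subset) (auto intro!: continuous_intros S_lmult closure_subset[THEN subsetD])
  then show ?thesis using assms unfolding FI by blast
qed

lemma I_rmult: assumes "z \<in> fibre_ideal \<phi> x" shows "z * a \<in> fibre_ideal \<phi> x"
proof -
  have "(\<lambda>z. z * a) ` closure (Sset x) \<subseteq> closure (Sset x)"
    by (rule image_closure_subset) (auto intro!: continuous_intros S_rmult closure_subset[THEN subsetD])
  then show ?thesis using assms unfolding FI by blast
qed

lemma I_add: assumes "z \<in> fibre_ideal \<phi> x" "z' \<in> fibre_ideal \<phi> x" shows "z + z' \<in> fibre_ideal \<phi> x"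
proof -
  have 1: "(\<lambda>z. z + s') ` closure (Sset x) \<subseteq> closure (Sset x)" if "s' \<in> Sset x" for s'
    by (rule image_closure_subset) (auto intro!: continuous_intros S_add that closure_subset[THEN subsetD])
  have "(\<lambda>w. z + w) ` closure (Sset x) \<subseteq> closure (Sset x)"
    by (rule image_closure_subset) (use 1 assms(1) FI in \<open>auto intro!: continuous_intros\<close>)
  then show ?thesis using assms unfolding FI by blast
qed

lemma I_diff: assumes "z \<in> fibre_ideal \<phi> x" "z' \<in> fibre_ideal \<phi> x" shows "z - z' \<in> fibre_ideal \<phi> x"
proof -
  have "(-1) * z' \<in> fibre_ideal \<phi> x" by (rule I_lmult[OF assms(2)])
  from I_add[OF assms(1) this] show ?thesis by simp
qed

end


lemma open_vimage_UNIV: "open B \<Longrightarrow> continuous_on UNIV f \<Longrightarrow> open (f -` B)"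
  using continuous_on_open_vimage[of UNIV f] by auto

context cxa begin

lemma shrink:
  assumes "open U" "closed U" "open W" "closed W" "W \<subseteq> U"
  shows "norm (\<phi> (ind W) * a) \<le> norm (\<phi> (ind U) * a)"
proof -
  have "\<phi> (ind W) = \<phi> (ind W) * \<phi> (ind U)"
    using P_int[OF assms(3,4,1,2)] assms(5) by (simp add: Int_absorb2)
  then have "\<phi> (ind W) * a = \<phi> (ind W) * (\<phi> (ind U) * a)" by (metis mult.assoc)
  also have "norm \<dots> \<le> norm (\<phi> (ind W)) * norm (\<phi> (ind U) * a)" by (rule norm_mult_ineq)
  also have "\<dots> \<le> 1 * norm (\<phi> (ind U) * a)"
    by (rule mult_right_mono) (use P_norm[OF assms(3,4)] in auto)
  finally show ?thesis by simp
qed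

lemma small_near:
  assumes zd: "\<And>N (y::'x). open N \<Longrightarrow> y \<in> N \<Longrightarrow> \<exists>U. open U \<and> closed U \<and> y \<in> U \<and> U \<subseteq> N"
    and a: "a \<in> fibre_ideal \<phi> x" and e: "\<epsilon> > 0"
  shows "\<exists>U. open U \<and> closed U \<and> x \<in> U \<and> norm (\<phi> (ind U) * a) \<le> \<epsilon>"
proof -
  have "a \<in> closure (Sset x)" using a FI by simp
  then have "\<forall>\<epsilon>>0. \<exists>y\<in>Sset x. dist y a < \<epsilon>" by (simp add: closure_approachable)
  then obtain s where s: "s \<in> Sset x" "dist s a < \<epsilon>/2" using e by (meson half_gt_zero)
  obtain n g b where sd: "s = (\<Sum>i<(n::nat). \<phi> (g i) * b i)" "\<forall>i<n. continuous_on UNIV (g i) \<and> g i x = 0"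
    using s(1) unfolding Sset_def mem_Collect_eq by (elim exE conjE) blast
  define B where "B = (\<Sum>i<n. norm (b i))"
  have B0: "B \<ge> 0" unfolding B_def by (simp add: sum_nonneg)
  define \<delta> where "\<delta> = \<epsilon> / (4 * (B + 1))"
  have d0: "\<delta> > 0" unfolding \<delta>_def using e B0 by simp
  define N where "N = (\<Inter>i\<in>{..<n}. g i -` ball 0 \<delta>)"
  have oN: "open N" unfolding N_def using sd(2) by (auto intro!: open_INT open_vimage_UNIV)
  have xN: "x \<in> N" unfolding N_def using sd(2) d0 by auto
  obtain U where U: "open U" "closed U" "x \<in> U" "U \<subseteq> N" using zd[OF oN xN] by blast
  note cU = cont_ind[OF U(1,2)]
  have ps: "\<phi> (ind U) * s = (\<Sum>i<n. \<phi> (\<lambda>t. ind U t * g i t) * b i)"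
    unfolding sd(1) sum_distrib_left
    by (rule sum.cong) (use sd(2) in \<open>auto simp: phi_mult[OF cU] mult.assoc\<close>)
  have nb: "norm (\<phi> (\<lambda>t. ind U t * g i t)) \<le> 2 * \<delta>" if "i < n" for i
  proof (rule phi_bound)
    show "continuous_on UNIV (\<lambda>t. ind U t * g i t)"
      using sd(2) that cU by (auto intro!: continuous_intros)
    show "norm (ind U t * g i t) \<le> \<delta>" for t
    proof (cases "t \<in> U")
      case True
      then have "t \<in> N" using U by auto
      then have "g i t \<in> ball 0 \<delta>" unfolding N_def using that by auto
      then show ?thesis using True by (simp add: ind_def)
    next
      case False then show ?thesis using d0 by (simp add: ind_def)
    qed
  qed (rule d0)
  have "norm (\<phi> (ind U) * s) \<le> (\<Sum>i<n. norm (\<phi> (\<lambda>t. ind U t * g i t) * b i))"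
    unfolding ps by (rule norm_sum)
  also have "\<dots> \<le> (\<Sum>i<n. 2 * \<delta> * norm (b i))"
  proof (rule sum_mono)
    fix i assume "i \<in> {..<n}"
    then have "norm (\<phi> (\<lambda>t. ind U t * g i t)) * norm (b i) \<le> 2 * \<delta> * norm (b i)"
      using nb by (intro mult_right_mono) auto
    then show "norm (\<phi> (\<lambda>t. ind U t * g i t) * b i) \<le> 2 * \<delta> * norm (b i)"
      using norm_mult_ineq order_trans by blast
  qed
  also have "\<dots> = 2 * \<delta> * B" unfolding B_def by (simp add: sum_distrib_left)
  also have "\<dots> \<le> \<epsilon> / 2"
  proof -
    have "2 * \<delta> * B = \<epsilon> * B / (2 * (B + 1))" unfolding \<delta>_def using B0 by (simp add: field_simps)
    also have "\<dots> \<le> \<epsilon> / 2" using B0 e by (simp add: field_simps)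
    finally show ?thesis .
  qed
  finally have n1: "norm (\<phi> (ind U) * s) \<le> \<epsilon> / 2" .
  have "norm (\<phi> (ind U) * (a - s)) \<le> norm (\<phi> (ind U)) * norm (a - s)" by (rule norm_mult_ineq)
  also have "\<dots> \<le> 1 * norm (a - s)" by (rule mult_right_mono) (use P_norm[OF U(1,2)] in auto)
  also have "\<dots> < \<epsilon>/2" using s(2) by (simp add: dist_norm norm_minus_commute)
  finally have n2: "norm (\<phi> (ind U) * (a - s)) < \<epsilon> / 2" .
  have "\<phi> (ind U) * a = \<phi> (ind U) * (a - s) + \<phi> (ind U) * s" by (simp add: algebra_simps)
  then have "norm (\<phi> (ind U) * a) \<le> norm (\<phi> (ind U) * (a - s)) + norm (\<phi> (ind U) * s)"
    by (metis norm_triangle_ineq)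
  then have "norm (\<phi> (ind U) * a) \<le> \<epsilon>" using n1 n2 by simp
  then show ?thesis using U by blast
qed

end


lemma ring_aux1: "(a::'a::ring_1) * x * b - (a - 1) * (x * b) - x * (b - 1) = x"
  by (simp add: algebra_simps)

lemma ring_aux2: "((vs::'a::ring_1) - e) * ws + e * (ws - f) + e * f = vs * ws"
  by (simp add: algebra_simps)


context cxa begin

lemma local_good:
  assumes zd: "\<And>N (y::'x). open N \<Longrightarrow> y \<in> N \<Longrightarrow> \<exists>U. open U \<and> closed U \<and> y \<in> U \<and> U \<subseteq> N"
    and pim: "properly_infinite_mod st (fibre_ideal \<phi> x)"
  shows "\<exists>U. open U \<and> closed U \<and> x \<in> U \<and> good U"
proof -
  obtain e f v w where H:
    "e * e - e \<in> fibre_ideal \<phi> x" "st e - e \<in> fibre_ideal \<phi> x" "f * f - f \<in> fibre_ideal \<phi> x"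
    "st f - f \<in> fibre_ideal \<phi> x" "e * f \<in> fibre_ideal \<phi> x"
    "st v * v - 1 \<in> fibre_ideal \<phi> x" "v * st v - e \<in> fibre_ideal \<phi> x"
    "st w * w - 1 \<in> fibre_ideal \<phi> x" "w * st w - f \<in> fibre_ideal \<phi> x"
    using pim unfolding properly_infinite_mod_def by blast
  have T1: "st v * ((v * st v - e) * (w * st w) + e * (w * st w - f) + e * f) * w \<in> fibre_ideal \<phi> x"
    by (intro I_rmult I_lmult I_add H(5,7,9))
  have T2: "(st v * v - 1) * (st v * w * (st w * w)) \<in> fibre_ideal \<phi> x"
    by (intro I_rmult H(6))
  have T3: "st v * w * (st w * w - 1) \<in> fibre_ideal \<phi> x"
    by (intro I_lmult H(8))
  have eq: "st v * w = st v * ((v * st v - e) * (w * st w) + e * (w * st w - f) + e * f) * w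
      - (st v * v - 1) * (st v * w * (st w * w)) - st v * w * (st w * w - 1)"
  proof -
    have "st v * ((v * st v - e) * (w * st w) + e * (w * st w - f) + e * f) * w
        = st v * (v * st v * (w * st w)) * w" by (simp only: ring_aux2)
    also have "\<dots> = (st v * v) * (st v * w) * (st w * w)" by (simp only: mult.assoc)
    finally show ?thesis by (simp only: ring_aux1)
  qed
  have m3: "st v * w \<in> fibre_ideal \<phi> x"
  proof -
    have "st v * ((v * st v - e) * (w * st w) + e * (w * st w - f) + e * f) * w
      - (st v * v - 1) * (st v * w * (st w * w)) - st v * w * (st w * w - 1) \<in> fibre_ideal \<phi> x"
      by (intro I_diff T1 T2 T3)
    then show ?thesis by (simp only: eq[symmetric])
  qed
  have e100: "(0::real) < 1/100" by simp
  obtain U1 where U1: "open U1" "closed U1" "x \<in> U1" "norm (\<phi> (ind U1) * (st v * v - 1)) \<le> 1/100"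
    using small_near[OF zd H(6) e100] by blast
  obtain U2 where U2: "open U2" "closed U2" "x \<in> U2" "norm (\<phi> (ind U2) * (st w * w - 1)) \<le> 1/100"
    using small_near[OF zd H(8) e100] by blast
  obtain U3 where U3: "open U3" "closed U3" "x \<in> U3" "norm (\<phi> (ind U3) * (st v * w)) \<le> 1/100"
    using small_near[OF zd m3 e100] by blast
  define U where "U = U1 \<inter> U2 \<inter> U3"
  have oU: "open U" "closed U" "x \<in> U" unfolding U_def using U1 U2 U3 by auto
  have n1: "norm (\<phi> (ind U) * (st v * v - 1)) \<le> 1/100"
  proof -
    have "U \<subseteq> U1" unfolding U_def by blast
    from shrink[OF U1(1,2) oU(1,2) this, of "st v * v - 1"] U1(4) show ?thesis by (rule order_trans)
  qed
  have n2: "norm (\<phi> (ind U) * (st w * w - 1)) \<le> 1/100"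
  proof -
    have "U \<subseteq> U2" unfolding U_def by blast
    from shrink[OF U2(1,2) oU(1,2) this, of "st w * w - 1"] U2(4) show ?thesis by (rule order_trans)
  qed
  have n3: "norm (\<phi> (ind U) * (st v * w)) \<le> 1/100"
  proof -
    have "U \<subseteq> U3" unfolding U_def by blast
    from shrink[OF U3(1,2) oU(1,2) this, of "st v * w"] U3(4) show ?thesis by (rule order_trans)
  qed
  define p where "p = \<phi> (ind U)"
  have sp: "st p = p" unfolding p_def by (rule P_sa[OF oU(1,2)])
  have pp: "p * p = p" unfolding p_def by (rule P_idem[OF oU(1,2)])
  have cen: "\<And>a. p * a = a * p" unfolding p_def by (rule P_cen[OF oU(1,2)])
  obtain r1 where R1: "st (p * v * r1) * (p * v * r1) = p" "p * (p * v * r1) = p * v * r1" "norm r1 \<le> 2"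
      "st r1 = r1" "r1 * p = p * r1"
    using normalize[OF sp pp cen, of v] n1 unfolding p_def[symmetric] by auto
  obtain r2 where R2: "st (p * w * r2) * (p * w * r2) = p" "p * (p * w * r2) = p * w * r2" "norm r2 \<le> 2"
      "st r2 = r2" "r2 * p = p * r2"
    using normalize[OF sp pp cen, of w] n2 unfolding p_def[symmetric] by auto
  have q: "st (p * v * r1) * (p * w * r2) = r1 * (p * (st v * w)) * r2"
  proof -
    have "st (p * v * r1) * (p * w * r2) = r1 * (st v * (p * p) * w) * r2"
      by (simp add: st_mult sp R1(4) mult.assoc)
    also have "st v * (p * p) * w = p * (st v * w)"
    proof -
      have "st v * (p * p) * w = (st v * p) * w" using pp by simp
      also have "\<dots> = (p * st v) * w" using cen[of "st v"] by simp
      finally show ?thesis by (simp only: mult.assoc)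
    qed
    finally show ?thesis .
  qed
  have "norm (st (p * v * r1) * (p * w * r2)) \<le> norm r1 * norm (p * (st v * w)) * norm r2"
    unfolding q
  proof -
    have "norm (r1 * (p * (st v * w)) * r2) \<le> norm (r1 * (p * (st v * w))) * norm r2" by (rule norm_mult_ineq)
    also have "\<dots> \<le> norm r1 * norm (p * (st v * w)) * norm r2"
      by (rule mult_right_mono[OF norm_mult_ineq norm_ge_zero])
    finally show "norm (r1 * (p * (st v * w)) * r2) \<le> norm r1 * norm (p * (st v * w)) * norm r2" .
  qed
  also have "\<dots> \<le> 2 * (1/100) * 2"
    using R1(3) R2(3) n3 unfolding p_def by (intro mult_mono) auto
  finally have nq: "norm (st (p * v * r1) * (p * w * r2)) \<le> 1/2" by simp
  obtain b3 where B3: "p * b3 = b3" "st b3 * b3 = p" "st (p * v * r1) * b3 = 0"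
    using orth[OF sp pp cen R1(2,1) R2(2,1) nq] by blast
  have "good U" unfolding good_def p_def[symmetric] using R1(1,2) B3 by blast
  then show ?thesis using oU by blast
qed

end

theorem proposition6p4:
  fixes sc :: "complex \<Rightarrow> 'a::{real_normed_algebra_1,banach} \<Rightarrow> 'a"
    and st :: "'a \<Rightarrow> 'a"
    and \<phi> :: "('x::t2_space \<Rightarrow> complex) \<Rightarrow> 'a"
  assumes "cstar_algebra sc st"
    and "compact (UNIV :: 'x set)"
    and "\<forall>x::'x. connected_component_set UNIV x = {x}"
    and "cx_algebra sc st \<phi>"
    and "\<forall>x::'x. properly_infinite_mod st (fibre_ideal \<phi> x)"
  shows "properly_infinite st (1::'a)"
proof -
  interpret cxa sc st \<phi>
    by unfold_locales (use assms(1,4) in auto)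
  have zd: "\<And>N (y::'x). open N \<Longrightarrow> y \<in> N \<Longrightarrow> \<exists>U. open U \<and> closed U \<and> y \<in> U \<and> U \<subseteq> N"
    using clopen_nbhd[OF assms(2,3)] by blast
  let ?C = "{U. open U \<and> closed U \<and> good U}"
  have cov: "UNIV \<subseteq> \<Union>?C"
  proof
    fix x :: 'x
    obtain U where "open U" "closed U" "x \<in> U" "good U" using local_good[OF zd assms(5)[rule_format, of x]] by blast
    then show "x \<in> \<Union>?C" by blast
  qed
  obtain C' where C': "C' \<subseteq> ?C" "finite C'" "UNIV \<subseteq> \<Union>C'"
    using compactE[OF assms(2) cov] by blast
  have "good (\<Union>C')" using C' by (intro good_Union) auto
  moreover have "\<Union>C' = UNIV" using C'(3) by blast
  ultimately have "good UNIV" by simp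
  then obtain b1 b2 where B: "st b1 * b1 = 1" "st b2 * b2 = 1" "st b1 * b2 = 0"
    unfolding good_def P_univ by blast
  show ?thesis unfolding properly_infinite_def
  proof (intro exI conjI)
    have "b1 * st b1 * (b1 * st b1) = b1 * (st b1 * b1) * st b1" by (simp only: mult.assoc)
    then show "b1 * st b1 * (b1 * st b1) = b1 * st b1" using B(1) by simp
    show "st (b1 * st b1) = b1 * st b1" by (simp add: st_mult)
    have "b2 * st b2 * (b2 * st b2) = b2 * (st b2 * b2) * st b2" by (simp only: mult.assoc)
    then show "b2 * st b2 * (b2 * st b2) = b2 * st b2" using B(2) by simp
    show "st (b2 * st b2) = b2 * st b2" by (simp add: st_mult)
    have "b1 * st b1 * (b2 * st b2) = b1 * (st b1 * b2) * st b2" by (simp only: mult.assoc)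
    then show "b1 * st b1 * (b2 * st b2) = 0" using B(3) by simp
    show "st b1 * b1 = 1" "st b2 * b2 = 1" by (fact B(1), fact B(2))
    show "b1 * st b1 = b1 * st b1" "b2 * st b2 = b2 * st b2" by simp_all
  qed
qed


end
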